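(* For any graph $G$ and any unit flow $F$ in $G$, there is an integral unit flow $F^*$ with $F^*[u,v]=F[u,v]$ for all $u,v\in V(G)$ and $\mathsf{inter}(F^* )\le\mathsf{inter}(F)$. Consequently, for every graph $G$ and every unit-weighted graph $H$, $$\mathsf{inter}^*_G(H)=\mathsf{inter}_G(H)\le\mathsf{con}_G(H).$$
   Context: Let $G=(V,E)$; $\mathcal P_{uv}$ is the set of paths in $G$ between $u$ and $v$, $\mathcal P=\bigcup\mathcal P_{uv}$. A flow is $F:\mathcal P\to[0,\infty)$, $F[u,v]=\sum_{p\in\mathcal P_{uv}}F(p)$. $F$ is integral if for each $u,v$ it is supported on at most one path of $\mathcal P_{uv}$, and a unit flow if $F[u,v]\in\{0,1\}$ for all $u,v$. Congestion: $\mathsf{con}(F)=\sum_{v}C_F(v)^2$, $C_F(v)=\sum_{p\ni v}F(p)$. Intersection number: $\mathsf{inter}(F)=\sum_{(u,v,u',v'):|\{u,v,u',v'\}|=4}\sum_{p\in\mathcal P_{uv},p'\in\mathcal P_{u'v'}}\sum_{x\in p\cap p'}F(p)F(p')$. For an edge-weighted graph $H$ with weights $w$, a flow $F$ in $G$ is an $H$-flow if there is an injective $\phi:V(H)\to V$ with $F[\phi(u),\phi(v)]\ge w(u,v)$ for every edge $\{u,v\}$ of $H$; unit-weighted means $w\equiv1$. Then $\mathsf{con}_G(H)=\min\mathsf{con}(F)$ and $\mathsf{inter}_G(H)=\min\mathsf{inter}(F)$ over $H$-flows $F$ in $G$, and $\mathsf{inter}^*_G(H)=\min\mathsf{inter}(F)$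 over integral $H$-flows $F$ in $G$. *)

theory Defs
  imports Complex_Main
begin

definition simple_graph :: "'a set \<Rightarrow> ('a \<times> 'a) set \<Rightarrow> bool" where
  "simple_graph V E \<longleftrightarrow> finite V \<and> E \<subseteq> V \<times> V \<and> sym E \<and> irrefl E"

definition is_path :: "'a set \<Rightarrow> ('a \<times> 'a) set \<Rightarrow> 'a list \<Rightarrow> bool" where
  "is_path V E p \<longleftrightarrow> p \<noteq> [] \<and> distinct p \<and> set p \<subseteq> V \<and>
     (\<forall>i. Suc i < length p \<longrightarrow> (p ! i, p ! Suc i) \<in> E)"

definition all_paths :: "'a set \<Rightarrow> ('a \<times> 'a) set \<Rightarrow> 'a list set" where
  "all_paths V E = {p. is_path V E p}"

definition paths :: "'a set \<Rightarrow> ('a \<times> 'a) set \<Rightarrow> 'a \<Rightarrow> 'a \<Rightarrow> 'a list set" where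
  "paths V E u v = {p. is_path V E p \<and> hd p = u \<and> last p = v}"

definition is_flow :: "'a set \<Rightarrow> ('a \<times> 'a) set \<Rightarrow> ('a list \<Rightarrow> real) \<Rightarrow> bool" where
  "is_flow V E F \<longleftrightarrow> (\<forall>p. 0 \<le> F p) \<and> (\<forall>p. \<not> is_path V E p \<longrightarrow> F p = 0)"

definition flow_val :: "'a set \<Rightarrow> ('a \<times> 'a) set \<Rightarrow> ('a list \<Rightarrow> real) \<Rightarrow> 'a \<Rightarrow> 'a \<Rightarrow> real" where
  "flow_val V E F u v = (\<Sum>p\<in>paths V E u v. F p)"

definition integral_flow :: "'a set \<Rightarrow> ('a \<times> 'a) set \<Rightarrow> ('a list \<Rightarrow> real) \<Rightarrow> bool" where
  "integral_flow V E F \<longleftrightarrow> (\<forall>u v. card {p \<in> paths V E u v. F p \<noteq> 0} \<le> 1)"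

definition unit_flow :: "'a set \<Rightarrow> ('a \<times> 'a) set \<Rightarrow> ('a list \<Rightarrow> real) \<Rightarrow> bool" where
  "unit_flow V E F \<longleftrightarrow> (\<forall>u v. flow_val V E F u v \<in> {0, 1})"

definition load :: "'a set \<Rightarrow> ('a \<times> 'a) set \<Rightarrow> ('a list \<Rightarrow> real) \<Rightarrow> 'a \<Rightarrow> real" where
  "load V E F x = (\<Sum>p\<in>{p \<in> all_paths V E. x \<in> set p}. F p)"

definition con :: "'a set \<Rightarrow> ('a \<times> 'a) set \<Rightarrow> ('a list \<Rightarrow> real) \<Rightarrow> real" where
  "con V E F = (\<Sum>x\<in>V. (load V E F x)\<^sup>2)"

definition inter :: "'a set \<Rightarrow> ('a \<times> 'a) set \<Rightarrow> ('a list \<Rightarrow> real) \<Rightarrow> real" where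
  "inter V E F =
     (\<Sum>(u, v, u', v') \<in> {(u, v, u', v'). u \<in> V \<and> v \<in> V \<and> u' \<in> V \<and> v' \<in> V \<and> card {u, v, u', v'} = 4}.
        \<Sum>p\<in>paths V E u v. \<Sum>p'\<in>paths V E u' v'. \<Sum>x\<in>set p \<inter> set p'. F p * F p')"

text \<open>H-flow for an edge-weighted graph H = (VH, EH) with weights w.
  EH is symmetric, so every edge {u,v} is required in both labelings.\<close>
definition is_H_flow :: "'a set \<Rightarrow> ('a \<times> 'a) set \<Rightarrow> 'b set \<Rightarrow> ('b \<times> 'b) set \<Rightarrow> ('b \<Rightarrow> 'b \<Rightarrow> real)
     \<Rightarrow> ('a list \<Rightarrow> real) \<Rightarrow> bool" where
  "is_H_flow V E VH EH w F \<longleftrightarrow> is_flow V E F \<and>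
     (\<exists>\<phi>. inj_on \<phi> VH \<and> \<phi> ` VH \<subseteq> V \<and>
        (\<forall>(u, v) \<in> EH. w u v \<le> flow_val V E F (\<phi> u) (\<phi> v)))"

definition con_G :: "'a set \<Rightarrow> ('a \<times> 'a) set \<Rightarrow> 'b set \<Rightarrow> ('b \<times> 'b) set \<Rightarrow> ('b \<Rightarrow> 'b \<Rightarrow> real) \<Rightarrow> real" where
  "con_G V E VH EH w = Inf (con V E ` {F. is_H_flow V E VH EH w F})"

definition inter_G :: "'a set \<Rightarrow> ('a \<times> 'a) set \<Rightarrow> 'b set \<Rightarrow> ('b \<times> 'b) set \<Rightarrow> ('b \<Rightarrow> 'b \<Rightarrow> real) \<Rightarrow> real" where
  "inter_G V E VH EH w = Inf (inter V E ` {F. is_H_flow V E VH EH w F})"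

definition inter_star_G :: "'a set \<Rightarrow> ('a \<times> 'a) set \<Rightarrow> 'b set \<Rightarrow> ('b \<times> 'b) set \<Rightarrow> ('b \<Rightarrow> 'b \<Rightarrow> real) \<Rightarrow> real" where
  "inter_star_G V E VH EH w = Inf (inter V E ` {F. is_H_flow V E VH EH w F \<and> integral_flow V E F})"

end

theory Submission
  imports Defs
begin

definition wt :: "'a list \<Rightarrow> 'a list \<Rightarrow> real" where
  "wt p p' = (if card {hd p, last p, hd p', last p'} = 4 then real (card (set p \<inter> set p')) else 0)"

definition Q :: "'a set \<Rightarrow> ('a \<times> 'a) set \<Rightarrow> ('a list \<Rightarrow> real) \<Rightarrow> real" where
  "Q V E H = (\<Sum>p\<in>all_paths V E. \<Sum>p'\<in>all_paths V E. wt p p' * (H p * H p'))"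

lemma finite_AP:
  assumes "finite V" shows "finite (all_paths V E)"
proof -
  have "all_paths V E \<subseteq> {xs. set xs \<subseteq> V \<and> length xs \<le> card V}"
  proof
    fix p assume "p \<in> all_paths V E"
    then have "distinct p" "set p \<subseteq> V" by (auto simp: all_paths_def is_path_def)
    then show "p \<in> {xs. set xs \<subseteq> V \<and> length xs \<le> card V}"
    proof -
      have "length p = card (set p)" using \<open>distinct p\<close> by (simp add: distinct_card)
      also have "\<dots> \<le> card V" using card_mono[OF assms \<open>set p \<subseteq> V\<close>] .
      finally show ?thesis using \<open>set p \<subseteq> V\<close> by simp
    qed
  qed
  moreover have "finite {xs. set xs \<subseteq> V \<and> length xs \<le> card V}"
    using finite_lists_length_le[OF assms] by simp
  ultimately show ?thesis by (rule finite_subset)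
qed

lemma paths_eq: "paths V E u v = {p \<in> all_paths V E. hd p = u \<and> last p = v}"
  by (auto simp: paths_def all_paths_def)

lemma paths_sub: "paths V E u v \<subseteq> all_paths V E"
  by (auto simp: paths_def all_paths_def)

lemma finite_paths: "finite V \<Longrightarrow> finite (paths V E u v)"
  using finite_AP finite_subset paths_sub by metis

lemma hd_last_in:
  assumes "p \<in> all_paths V E" shows "hd p \<in> V" "last p \<in> V"
  using assms by (auto simp: all_paths_def is_path_def)

lemma inter_eq:
  assumes fV: "finite V"
  shows "inter V E H = Q V E H"
proof -
  let ?AP = "all_paths V E"
  let ?T = "V \<times> V \<times> V \<times> V"
  define \<kappa> where "\<kappa> = (\<lambda>z::'a list \<times> 'a list. (hd (fst z), last (fst z), hd (snd z), last (snd z)))"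
  define g where "g = (\<lambda>z::'a list \<times> 'a list. wt (fst z) (snd z) * (H (fst z) * H (snd z)))"
  define \<Phi> where "\<Phi> = (\<lambda>(u,v,u',v'). \<Sum>p\<in>paths V E u v. \<Sum>p'\<in>paths V E u' v'.
        real (card (set p \<inter> set p')) * (H p * H p'))"
  define P4 where "P4 = (\<lambda>(u::'a,v::'a,u'::'a,v'::'a). card {u,v,u',v'} = 4)"
  have fin: "finite ?AP" using finite_AP[OF fV] .
  have "Q V E H = (\<Sum>z\<in>?AP \<times> ?AP. g z)"
    unfolding Q_def g_def by (simp add: sum.cartesian_product case_prod_beta)
  also have "\<dots> = (\<Sum>t\<in>?T. \<Sum>z\<in>{z\<in>?AP \<times> ?AP. \<kappa> z = t}. g z)"
  proof (rule sum.group[symmetric])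
    show "finite (?AP \<times> ?AP)" using fin by simp
    show "finite ?T" using fV by simp
    show "\<kappa> ` (?AP \<times> ?AP) \<subseteq> ?T" using hd_last_in by (auto simp: \<kappa>_def)
  qed
  also have "\<dots> = (\<Sum>t\<in>?T. if P4 t then \<Phi> t else 0)"
  proof (rule sum.cong[OF refl])
    fix t assume "t \<in> ?T"
    obtain u v u' v' where t: "t = (u,v,u',v')" by (cases t) auto
    have "{z\<in>?AP \<times> ?AP. \<kappa> z = t} = paths V E u v \<times> paths V E u' v'"
      by (auto simp: t \<kappa>_def paths_eq)
    then have "(\<Sum>z\<in>{z\<in>?AP \<times> ?AP. \<kappa> z = t}. g z) =
       (\<Sum>p\<in>paths V E u v. \<Sum>p'\<in>paths V E u' v'. g (p,p'))"
      by (simp add: sum.cartesian_product)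
    also have "\<dots> = (\<Sum>p\<in>paths V E u v. \<Sum>p'\<in>paths V E u' v'.
         if P4 t then real (card (set p \<inter> set p')) * (H p * H p') else 0)"
      by (intro sum.cong refl) (auto simp: g_def wt_def P4_def t paths_def)
    also have "\<dots> = (if P4 t then \<Phi> t else 0)"
      by (simp add: \<Phi>_def t)
    finally show "(\<Sum>z\<in>{z\<in>?AP \<times> ?AP. \<kappa> z = t}. g z) = (if P4 t then \<Phi> t else 0)" .
  qed
  also have "\<dots> = (\<Sum>t\<in>{t\<in>?T. P4 t}. \<Phi> t)"
    using fV by (simp add: sum.inter_filter)
  also have "{t\<in>?T. P4 t} = {(u, v, u', v'). u \<in> V \<and> v \<in> V \<and> u' \<in> V \<and> v' \<in> V \<and> card {u, v, u', v'} = 4}"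
    by (auto simp: P4_def)
  also have "(\<Sum>t\<in>\<dots>. \<Phi> t) = inter V E H"
    unfolding inter_def \<Phi>_def
    by (intro sum.cong refl) (auto simp: mult.commute)
  finally show ?thesis by (rule sym)
qed

lemma Q_diff_gen:
  assumes fin: "finite A"
    and w0: "\<forall>p\<in>A. \<forall>p'\<in>A. G p \<noteq> H p \<and> G p' \<noteq> H p' \<longrightarrow> w p p' = (0::real)"
  shows "(\<Sum>p\<in>A. \<Sum>p'\<in>A. w p p' * (G p * G p')) - (\<Sum>p\<in>A. \<Sum>p'\<in>A. w p p' * (H p * H p'))
       = (\<Sum>p\<in>A. (G p - H p) * (\<Sum>p'\<in>A. (w p p' + w p' p) * H p'))"
proof -
  have pt: "w p p' * (G p * G p') - w p p' * (H p * H p') =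
       w p p' * (G p - H p) * H p' + w p p' * H p * (G p' - H p')" if "p \<in> A" "p' \<in> A" for p p'
  proof (cases "G p = H p")
    case True then show ?thesis by (simp add: algebra_simps)
  next
    case False
    show ?thesis
    proof (cases "G p' = H p'")
      case True then show ?thesis by (simp add: algebra_simps)
    next
      case False2: False
      then have "w p p' = 0" using w0 that False by blast
      then show ?thesis by simp
    qed
  qed
  have "(\<Sum>p\<in>A. \<Sum>p'\<in>A. w p p' * (G p * G p')) - (\<Sum>p\<in>A. \<Sum>p'\<in>A. w p p' * (H p * H p'))
      = (\<Sum>p\<in>A. \<Sum>p'\<in>A. w p p' * (G p * G p') - w p p' * (H p * H p'))"
    by (simp add: sum_subtractf)
  also have "\<dots> = (\<Sum>p\<in>A. \<Sum>p'\<in>A. w p p' * (G p - H p) * H p' + w p p' * H p * (G p' - H p'))"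
    using pt by (intro sum.cong refl) simp_all
  also have "\<dots> = (\<Sum>p\<in>A. \<Sum>p'\<in>A. w p p' * (G p - H p) * H p') + (\<Sum>p\<in>A. \<Sum>p'\<in>A. w p p' * H p * (G p' - H p'))"
    by (simp add: sum.distrib)
  also have "(\<Sum>p\<in>A. \<Sum>p'\<in>A. w p p' * H p * (G p' - H p')) = (\<Sum>p'\<in>A. \<Sum>p\<in>A. w p p' * H p * (G p' - H p'))"
    by (rule sum.swap)
  also have "(\<Sum>p\<in>A. \<Sum>p'\<in>A. w p p' * (G p - H p) * H p') + (\<Sum>p'\<in>A. \<Sum>p\<in>A. w p p' * H p * (G p' - H p'))
     = (\<Sum>p\<in>A. (G p - H p) * (\<Sum>p'\<in>A. (w p p' + w p' p) * H p'))"
  proof -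
    have "(\<Sum>p\<in>A. (G p - H p) * (\<Sum>p'\<in>A. (w p p' + w p' p) * H p'))
        = (\<Sum>p\<in>A. \<Sum>p'\<in>A. (G p - H p) * ((w p p' + w p' p) * H p'))"
      by (simp add: sum_distrib_left)
    also have "\<dots> = (\<Sum>p\<in>A. \<Sum>p'\<in>A. w p p' * (G p - H p) * H p' + w p' p * H p' * (G p - H p))"
      by (intro sum.cong refl) (simp add: ring_distribs mult_ac)
    also have "\<dots> = (\<Sum>p\<in>A. \<Sum>p'\<in>A. w p p' * (G p - H p) * H p') + (\<Sum>p\<in>A. \<Sum>p'\<in>A. w p' p * H p' * (G p - H p))"
      by (simp add: sum.distrib)
    finally show ?thesis by simp
  qed
  finally show ?thesis .
qed


definition Lf :: "'a set \<Rightarrow> ('a \<times> 'a) set \<Rightarrow> ('a list \<Rightarrow> real) \<Rightarrow> 'a list \<Rightarrow> real" where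
  "Lf V E H p = (\<Sum>p'\<in>all_paths V E. (wt p p' + wt p' p) * H p')"

lemma wt_same_block:
  assumes "hd p = hd p'" "last p = last p'"
  shows "wt p p' = 0"
proof -
  have "card {hd p, last p, hd p', last p'} \<le> 2"
    using assms by (simp add: card_insert_le_m1 card_insert_if)
  then show ?thesis by (simp add: wt_def)
qed

lemma Q_diff:
  assumes fV: "finite V" and agree: "\<forall>p. (hd p, last p) \<noteq> (u, v) \<longrightarrow> G p = H p"
  shows "Q V E G - Q V E H = (\<Sum>p\<in>all_paths V E. (G p - H p) * Lf V E H p)"
  unfolding Q_def Lf_def
proof (rule Q_diff_gen)
  show "finite (all_paths V E)" using finite_AP[OF fV] .
  show "\<forall>p\<in>all_paths V E. \<forall>p'\<in>all_paths V E. G p \<noteq> H p \<and> G p' \<noteq> H p' \<longrightarrow> wt p p' = 0"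
  proof (intro ballI impI)
    fix p p' assume "G p \<noteq> H p \<and> G p' \<noteq> H p'"
    then have "(hd p, last p) = (u, v)" "(hd p', last p') = (u, v)" using agree by blast+
    then show "wt p p' = 0" by (intro wt_same_block) auto
  qed
qed

lemma step:
  assumes fV: "finite V" and fl: "is_flow V E H"
  shows "\<exists>G. is_flow V E G \<and> (\<forall>p. (hd p, last p) \<noteq> (u, v) \<longrightarrow> G p = H p) \<and>
     card {p \<in> paths V E u v. G p \<noteq> 0} \<le> 1 \<and> flow_val V E G u v = flow_val V E H u v \<and>
     Q V E G \<le> Q V E H"
proof (cases "paths V E u v = {}")
  case True
  then show ?thesis using fl by (intro exI[of _ H]) auto
next
  case False
  let ?P = "paths V E u v"
  let ?L = "Lf V E H"
  have fP: "finite ?P" using finite_paths[OF fV] .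
  obtain q where q: "q \<in> ?P" "?L q = Min (?L ` ?P)"
    using Min_in[of "?L ` ?P"] fP False by (metis (no_types, lifting) finite_imageI image_iff image_is_empty)
  have qmin: "?L q \<le> ?L p" if "p \<in> ?P" for p
    using q(2) Min_le[of "?L ` ?P" "?L p"] fP that by simp
  define m where "m = flow_val V E H u v"
  have m: "m = (\<Sum>p\<in>?P. H p)" by (simp add: m_def flow_val_def)
  have Hnn: "\<And>p. 0 \<le> H p" using fl by (simp add: is_flow_def)
  have m0: "0 \<le> m" using m Hnn by (simp add: sum_nonneg)
  define G where "G = (\<lambda>p. if hd p = u \<and> last p = v then (if p = q then m else 0) else H p)"
  have agree: "\<forall>p. (hd p, last p) \<noteq> (u, v) \<longrightarrow> G p = H p" by (simp add: G_def)
  have qpath: "is_path V E q" using q(1) by (simp add: paths_def)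
  have flG: "is_flow V E G"
    using fl m0 qpath unfolding is_flow_def G_def by auto
  have GonP: "G p = (if p = q then m else 0)" if "p \<in> ?P" for p
    using that by (simp add: G_def paths_def)
  have card: "card {p \<in> ?P. G p \<noteq> 0} \<le> 1"
  proof -
    have "{p \<in> ?P. G p \<noteq> 0} \<subseteq> {q}"
    proof
      fix x assume "x \<in> {p \<in> ?P. G p \<noteq> 0}"
      then have "x \<in> ?P" "G x \<noteq> 0" by auto
      then show "x \<in> {q}" using GonP[of x] by (cases "x = q") auto
    qed
    then have "card {p \<in> ?P. G p \<noteq> 0} \<le> card {q}" by (intro card_mono) simp_all
    then show ?thesis by simp
  qed
  have fv: "flow_val V E G u v = m"
  proof -
    have "flow_val V E G u v = (\<Sum>p\<in>?P. if p = q then m else 0)"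
      unfolding flow_val_def using GonP by (intro sum.cong refl) auto
    also have "\<dots> = m" using fP q(1) by simp
    finally show ?thesis .
  qed
  have "Q V E G - Q V E H = (\<Sum>p\<in>all_paths V E. (G p - H p) * ?L p)"
    by (rule Q_diff[OF fV agree])
  also have "\<dots> = (\<Sum>p\<in>?P. (G p - H p) * ?L p)"
  proof (rule sum.mono_neutral_right)
    show "finite (all_paths V E)" using finite_AP[OF fV] .
    show "?P \<subseteq> all_paths V E" by (rule paths_sub)
    show "\<forall>i\<in>all_paths V E - ?P. (G i - H i) * ?L i = 0"
      using agree by (auto simp: paths_eq)
  qed
  also have "\<dots> = (\<Sum>p\<in>?P. G p * ?L p) - (\<Sum>p\<in>?P. H p * ?L p)"
    by (simp add: sum_subtractf left_diff_distrib)
  also have "(\<Sum>p\<in>?P. G p * ?L p) = m * ?L q"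
  proof -
    have "(\<Sum>p\<in>?P. G p * ?L p) = (\<Sum>p\<in>?P. if p = q then m * ?L q else 0)"
      using GonP by (intro sum.cong refl) auto
    also have "\<dots> = m * ?L q" using fP q(1) by simp
    finally show ?thesis .
  qed
  also have "m * ?L q \<le> (\<Sum>p\<in>?P. H p * ?L p)"
  proof -
    have "m * ?L q = (\<Sum>p\<in>?P. H p * ?L q)" by (simp add: m sum_distrib_right)
    also have "\<dots> \<le> (\<Sum>p\<in>?P. H p * ?L p)"
      using qmin Hnn by (intro sum_mono mult_left_mono) auto
    finally show ?thesis .
  qed
  then have "m * ?L q - (\<Sum>p\<in>?P. H p * ?L p) \<le> 0" by simp
  finally have "Q V E G \<le> Q V E H" by simp
  then show ?thesis using flG agree card fv m_def by blast
qed


lemma blocks: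
  assumes fV: "finite V" and "finite K"
  shows "is_flow V E H \<Longrightarrow> \<exists>G. is_flow V E G \<and> (\<forall>p. (hd p, last p) \<notin> K \<longrightarrow> G p = H p) \<and>
     (\<forall>b\<in>K. card {p \<in> paths V E (fst b) (snd b). G p \<noteq> 0} \<le> 1) \<and>
     (\<forall>u v. flow_val V E G u v = flow_val V E H u v) \<and> Q V E G \<le> Q V E H"
  using assms(2)
proof (induction K arbitrary: H rule: finite_induct)
  case empty
  then show ?case by (intro exI[of _ H]) auto
next
  case (insert b K)
  obtain u v where b: "b = (u, v)" by (cases b) auto
  obtain G1 where G1: "is_flow V E G1" "\<forall>p. (hd p, last p) \<noteq> (u, v) \<longrightarrow> G1 p = H p"
     "card {p \<in> paths V E u v. G1 p \<noteq> 0} \<le> 1" "flow_val V E G1 u v = flow_val V E H u v"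
     "Q V E G1 \<le> Q V E H"
    using step[OF fV insert.prems] by blast
  obtain G2 where G2: "is_flow V E G2" "\<forall>p. (hd p, last p) \<notin> K \<longrightarrow> G2 p = G1 p"
     "\<forall>b\<in>K. card {p \<in> paths V E (fst b) (snd b). G2 p \<noteq> 0} \<le> 1"
     "\<forall>u v. flow_val V E G2 u v = flow_val V E G1 u v" "Q V E G2 \<le> Q V E G1"
    using insert.IH[OF G1(1)] by blast
  have fv1: "flow_val V E G1 a c = flow_val V E H a c" for a c
  proof (cases "(a, c) = (u, v)")
    case True then show ?thesis using G1(4) by simp
  next
    case False
    then show ?thesis unfolding flow_val_def
      using G1(2) by (intro sum.cong refl) (auto simp: paths_def)
  qed
  have "{p \<in> paths V E u v. G2 p \<noteq> 0} = {p \<in> paths V E u v. G1 p \<noteq> 0}"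
    using G2(2) insert.hyps(2) b by (auto simp: paths_def)
  then have cb: "card {p \<in> paths V E (fst b) (snd b). G2 p \<noteq> 0} \<le> 1" using G1(3) b by simp
  show ?case
  proof (intro exI[of _ G2] conjI)
    show "is_flow V E G2" by (rule G2(1))
    show "\<forall>p. (hd p, last p) \<notin> insert b K \<longrightarrow> G2 p = H p" using G1(2) G2(2) b by auto
    show "\<forall>b\<in>insert b K. card {p \<in> paths V E (fst b) (snd b). G2 p \<noteq> 0} \<le> 1" using cb G2(3) by auto
    show "\<forall>u v. flow_val V E G2 u v = flow_val V E H u v" using G2(4) fv1 by simp
    show "Q V E G2 \<le> Q V E H" using G1(5) G2(5) by simp
  qed
qed

lemma integralize:
  assumes fV: "finite V" and fl: "is_flow V E H"
  shows "\<exists>G. is_flow V E G \<and> integral_flow V E G \<and>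
     (\<forall>u v. flow_val V E G u v = flow_val V E H u v) \<and> inter V E G \<le> inter V E H"
proof -
  obtain G where G: "is_flow V E G" "\<forall>b\<in>V \<times> V. card {p \<in> paths V E (fst b) (snd b). G p \<noteq> 0} \<le> 1"
     "\<forall>u v. flow_val V E G u v = flow_val V E H u v" "Q V E G \<le> Q V E H"
    using blocks[OF fV _ fl, of "V \<times> V"] fV by blast
  have "integral_flow V E G"
    unfolding integral_flow_def
  proof (intro allI)
    fix u v
    show "card {p \<in> paths V E u v. G p \<noteq> 0} \<le> 1"
    proof (cases "(u, v) \<in> V \<times> V")
      case True then show ?thesis using G(2) by force
    next
      case False
      have "p \<notin> paths V E u v" for p
      proof
        assume p: "p \<in> paths V E u v"
        then have "p \<in> all_paths V E" using paths_sub[of V E u v] by (rule subsetD[rotated])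
        then have "hd p \<in> V" "last p \<in> V" by (rule hd_last_in)+
        moreover have "hd p = u" "last p = v" using p by (auto simp: paths_def)
        ultimately show False using False by auto
      qed
      then have "paths V E u v = {}" by blast
      then show ?thesis by simp
    qed
  qed
  then show ?thesis using G inter_eq[OF fV] by metis
qed

lemma wt_nonneg: "0 \<le> wt p p'" by (simp add: wt_def)

lemma Q_mono:
  assumes "\<And>p. 0 \<le> G p" "\<And>p. G p \<le> H p"
  shows "Q V E G \<le> Q V E H"
  unfolding Q_def
  by (intro sum_mono mult_left_mono mult_mono wt_nonneg) (auto intro: assms order_trans)

lemma Q_nonneg:
  assumes "\<And>p. 0 \<le> G p"
  shows "0 \<le> Q V E G"
  unfolding Q_def
  by (intro sum_nonneg mult_nonneg_nonneg wt_nonneg assms)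


lemma Q_le_con:
  assumes fV: "finite V" and nn: "\<And>p. 0 \<le> F p"
  shows "Q V E F \<le> con V E F"
proof -
  let ?AP = "all_paths V E"
  have fin: "finite ?AP" using finite_AP[OF fV] .
  define a where "a = (\<lambda>x p. if x \<in> set p then F p else 0)"
  have "con V E F = (\<Sum>x\<in>V. (\<Sum>p\<in>?AP. a x p)\<^sup>2)"
    unfolding con_def load_def a_def using fin by (simp add: sum.inter_filter)
  also have "\<dots> = (\<Sum>x\<in>V. \<Sum>p\<in>?AP. \<Sum>p'\<in>?AP. a x p * a x p')"
    by (simp add: power2_eq_square sum_product)
  also have "\<dots> = (\<Sum>p\<in>?AP. \<Sum>x\<in>V. \<Sum>p'\<in>?AP. a x p * a x p')"
    by (rule sum.swap)
  also have "\<dots> = (\<Sum>p\<in>?AP. \<Sum>p'\<in>?AP. \<Sum>x\<in>V. a x p * a x p')"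
    by (intro sum.cong refl sum.swap)
  finally have con: "con V E F = (\<Sum>p\<in>?AP. \<Sum>p'\<in>?AP. \<Sum>x\<in>V. a x p * a x p')" .
  have trm: "wt p p' * (F p * F p') \<le> (\<Sum>x\<in>V. a x p * a x p')" if p: "p \<in> ?AP" for p p'
  proof -
    have sub: "set p \<subseteq> V" using p by (auto simp: all_paths_def is_path_def)
    have "(\<Sum>x\<in>V. a x p * a x p') = (\<Sum>x\<in>V. if x \<in> set p \<inter> set p' then F p * F p' else 0)"
      by (intro sum.cong refl) (auto simp: a_def)
    also have "\<dots> = (\<Sum>x\<in>V \<inter> (set p \<inter> set p'). F p * F p')"
      by (rule sum.inter_restrict[symmetric, OF fV])
    also have "V \<inter> (set p \<inter> set p') = set p \<inter> set p'" using sub by blast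
    also have "(\<Sum>x\<in>set p \<inter> set p'. F p * F p') = real (card (set p \<inter> set p')) * (F p * F p')"
      by simp
    finally have eq: "(\<Sum>x\<in>V. a x p * a x p') = real (card (set p \<inter> set p')) * (F p * F p')" .
    have "wt p p' \<le> real (card (set p \<inter> set p'))" by (simp add: wt_def)
    then show ?thesis unfolding eq using nn by (intro mult_right_mono) (auto intro: mult_nonneg_nonneg)
  qed
  show ?thesis unfolding con Q_def
    using trm by (intro sum_mono) auto
qed


lemma div_le_self_aux:
  fixes a d :: real
  assumes "0 \<le> a" "1 \<le> d"
  shows "a / d \<le> a"
proof -
  have "a \<le> a * d" using assms by (metis mult_left_mono mult.right_neutral)
  then show ?thesis using assms by (simp add: divide_le_eq)
qed

lemma H_reduce:
  assumes fV: "finite V" and F: "is_H_flow V E VH EH (\<lambda>_ _. 1) F"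
  shows "\<exists>F'. is_H_flow V E VH EH (\<lambda>_ _. 1) F' \<and> integral_flow V E F' \<and> inter V E F' \<le> inter V E F"
proof -
  have fl: "is_flow V E F" using F by (simp add: is_H_flow_def)
  from F obtain \<phi> where \<phi>: "inj_on \<phi> VH" "\<phi> ` VH \<subseteq> V"
      "\<forall>(u, v) \<in> EH. 1 \<le> flow_val V E F (\<phi> u) (\<phi> v)"
    by (auto simp: is_H_flow_def)
  define T where "T = (\<lambda>(u, v). (\<phi> u, \<phi> v)) ` EH"
  have T1: "1 \<le> flow_val V E F a c" if "(a, c) \<in> T" for a c
    using that \<phi>(3) by (auto simp: T_def)
  define fv where "fv = flow_val V E F"
  define F1 where "F1 = (\<lambda>p. if (hd p, last p) \<in> T then F p / fv (hd p) (last p) else 0)"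
  have Fnn: "\<And>p. 0 \<le> F p" using fl by (simp add: is_flow_def)
  have F1nn: "0 \<le> F1 p" for p
  proof (cases "(hd p, last p) \<in> T")
    case True
    then have "1 \<le> fv (hd p) (last p)" using T1 by (simp add: fv_def)
    then show ?thesis using Fnn[of p] True by (simp add: F1_def)
  qed (simp add: F1_def)
  have F1le: "F1 p \<le> F p" for p
    using Fnn T1 div_le_self_aux by (auto simp: F1_def fv_def)
  have fl1: "is_flow V E F1"
    unfolding is_flow_def using F1nn fl by (auto simp: F1_def is_flow_def)
  have fv1: "flow_val V E F1 a c = 1" if "(a, c) \<in> T" for a c
  proof -
    have "flow_val V E F1 a c = (\<Sum>p\<in>paths V E a c. F p / fv a c)"
      unfolding flow_val_def using that by (intro sum.cong refl) (auto simp: F1_def paths_def)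
    also have "\<dots> = fv a c / fv a c" by (simp only: sum_divide_distrib[symmetric] fv_def flow_val_def)
    also have "\<dots> = 1" using T1[OF that] by (simp add: fv_def)
    finally show ?thesis .
  qed
  obtain F2 where F2: "is_flow V E F2" "integral_flow V E F2"
     "\<forall>u v. flow_val V E F2 u v = flow_val V E F1 u v" "inter V E F2 \<le> inter V E F1"
    using integralize[OF fV fl1] by blast
  have "is_H_flow V E VH EH (\<lambda>_ _. 1) F2"
    unfolding is_H_flow_def
  proof (intro conjI exI[of _ \<phi>])
    show "is_flow V E F2" by (rule F2(1))
    show "inj_on \<phi> VH" "\<phi> ` VH \<subseteq> V" using \<phi> by auto
    show "\<forall>(u, v)\<in>EH. 1 \<le> flow_val V E F2 (\<phi> u) (\<phi> v)"
    proof (intro ballI, clarify)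
      fix u v assume "(u, v) \<in> EH"
      then have "(\<phi> u, \<phi> v) \<in> T" by (auto simp: T_def)
      then show "1 \<le> flow_val V E F2 (\<phi> u) (\<phi> v)" using F2(3) fv1 by simp
    qed
  qed
  moreover have "inter V E F1 \<le> inter V E F"
    using Q_mono[of F1 F V E] F1nn F1le inter_eq[OF fV] by simp
  ultimately show ?thesis using F2 by (meson order_trans)
qed

theorem lemma3p3:
  fixes V :: "'a set" and E :: "('a \<times> 'a) set"
  assumes G: "simple_graph V E"
  shows "(\<forall>F. is_flow V E F \<and> unit_flow V E F \<longrightarrow>
            (\<exists>F'. is_flow V E F' \<and> integral_flow V E F' \<and> unit_flow V E F' \<and>
                  (\<forall>u v. flow_val V E F' u v = flow_val V E F u v) \<and>
                  inter V E F' \<le> inter V E F))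
       \<and> (\<forall>(VH :: 'b set) EH. simple_graph VH EH \<longrightarrow>
            inter_star_G V E VH EH (\<lambda>_ _. 1) = inter_G V E VH EH (\<lambda>_ _. 1) \<and>
            inter_G V E VH EH (\<lambda>_ _. 1) \<le> con_G V E VH EH (\<lambda>_ _. 1))"
proof (intro conjI allI impI)
  have fV: "finite V" using G by (simp add: simple_graph_def)
  show "\<exists>F'. is_flow V E F' \<and> integral_flow V E F' \<and> unit_flow V E F' \<and>
                  (\<forall>u v. flow_val V E F' u v = flow_val V E F u v) \<and>
                  inter V E F' \<le> inter V E F" if Fa: "is_flow V E F \<and> unit_flow V E F" for F
  proof -
    obtain F' where F': "is_flow V E F'" "integral_flow V E F'"
       "\<forall>u v. flow_val V E F' u v = flow_val V E F u v" "inter V E F' \<le> inter V E F"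
      using integralize[OF fV conjunct1[OF Fa]] by blast
    have "unit_flow V E F'" using F'(3) Fa by (simp add: unit_flow_def)
    then show ?thesis using F' by blast
  qed
  fix VH :: "'b set" and EH
  define S where "S = {F. is_H_flow V E VH EH (\<lambda>_ _. 1) F}"
  define Ss where "Ss = {F. is_H_flow V E VH EH (\<lambda>_ _. 1) F \<and> integral_flow V E F}"
  have nn: "0 \<le> inter V E F" if "F \<in> S" for F
  proof -
    have "\<And>p. 0 \<le> F p" using that by (simp add: S_def is_H_flow_def is_flow_def)
    then show ?thesis using Q_nonneg inter_eq[OF fV] by metis
  qed
  have ic: "inter V E F \<le> con V E F" if "F \<in> S" for F
  proof -
    have "\<And>p. 0 \<le> F p" using that by (simp add: S_def is_H_flow_def is_flow_def)
    then show ?thesis using Q_le_con[OF fV] inter_eq[OF fV] by metis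
  qed
  have SsS: "Ss \<subseteq> S" by (auto simp: S_def Ss_def)
  have red: "\<exists>F'\<in>Ss. inter V E F' \<le> inter V E F" if "F \<in> S" for F
    using H_reduce[OF fV, of E VH EH F] that by (auto simp: S_def Ss_def)
  have bA: "bdd_below (inter V E ` S)" using nn by (intro bdd_belowI[of _ 0]) auto
  have bAs: "bdd_below (inter V E ` Ss)" using nn SsS by (intro bdd_belowI[of _ 0]) auto
  have "inter_star_G V E VH EH (\<lambda>_ _. 1) = inter_G V E VH EH (\<lambda>_ _. 1) \<and>
            inter_G V E VH EH (\<lambda>_ _. 1) \<le> con_G V E VH EH (\<lambda>_ _. 1)"
  proof (cases "S = {}")
    case True
    then have "Ss = {}" using SsS by blast
    then show ?thesis using True
      unfolding inter_star_G_def inter_G_def con_G_def S_def[symmetric] Ss_def[symmetric] by simp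
  next
    case False
    then obtain F0 where F0: "F0 \<in> S" by blast
    then obtain F1 where "F1 \<in> Ss" using red by blast
    then have Ssne: "Ss \<noteq> {}" by blast
    have le1: "Inf (inter V E ` S) \<le> Inf (inter V E ` Ss)"
      using Ssne bA SsS by (intro cInf_superset_mono) auto
    have le2: "Inf (inter V E ` Ss) \<le> Inf (inter V E ` S)"
    proof (rule cInf_greatest)
      show "inter V E ` S \<noteq> {}" using False by simp
      fix a assume "a \<in> inter V E ` S"
      then obtain F where F: "F \<in> S" "a = inter V E F" by blast
      then obtain F' where "F' \<in> Ss" "inter V E F' \<le> inter V E F" using red by blast
      then have "Inf (inter V E ` Ss) \<le> inter V E F'" using bAs by (intro cInf_lower) auto
      then show "Inf (inter V E ` Ss) \<le> a" using F \<open>inter V E F' \<le> inter V E F\<close> by simp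
    qed
    have le3: "Inf (inter V E ` S) \<le> Inf (con V E ` S)"
    proof (rule cInf_greatest)
      show "con V E ` S \<noteq> {}" using False by simp
      fix c assume "c \<in> con V E ` S"
      then obtain F where F: "F \<in> S" "c = con V E F" by blast
      have "Inf (inter V E ` S) \<le> inter V E F" using bA F by (intro cInf_lower) auto
      then show "Inf (inter V E ` S) \<le> c" using ic[OF F(1)] F by simp
    qed
    show ?thesis
      unfolding inter_star_G_def inter_G_def con_G_def S_def[symmetric] Ss_def[symmetric]
      using le1 le2 le3 by simp
  qed
  then show "inter_star_G V E VH EH (\<lambda>_ _. 1) = inter_G V E VH EH (\<lambda>_ _. 1)"
     "inter_G V E VH EH (\<lambda>_ _. 1) \<le> con_G V E VH EH (\<lambda>_ _. 1)" by auto
qed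

end
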